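(* Let $n\geq 3$ be an integer and let $G$ be a finite group with $n$ elements and identity $1$. Let $X_G$ be the Cayley graph of $G\times G$ with respect to the subset $\{(s,1),(1,s),(s,s): s\in G,\ s\neq 1\}$. Then: (i) $X_G$ is strongly regular with parameters $(n^2,\,3n-3,\,n,\,6)$, i.e. it has $n^2$ vertices, is regular of degree $3n-3$, any two adjacent vertices have exactly $n$ common neighbours, and any two distinct non-adjacent vertices have exactly $6$ common neighbours; (ii) the number of elements of order $2$ in $G$ is a graph invariant of $X_G$: if $G$ and $H$ are groups with $n$ elements and $X_G$ is isomorphic to $X_H$ as graphs, then $G$ and $H$ have the same number of elements of order $2$.
   Context: For a finite group $\Gamma$ and a subset $S\subseteq\Gamma$ that does not contain the identity, is closed under inverses, and generates $\Gamma$, the Cayley graph of $\Gamma$ with respect to $S$ has vertex set $\Gamma$ and an edge between $g$ and $h$ whenever $g^{-1}h\in S$. A regular graph is strongly regular if it is not complete and there are non-negative integers $a,c$ such that any two adjacent vertices have exactly $a$ common neighbours and any two distinct non-adjacent vertices have exactly $c$ common neighbours. *)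

theory Defs
  imports "HOL-Algebra.Multiplicative_Group"
begin

definition cayley_adj :: "('a, 'm) monoid_scheme \<Rightarrow> 'a set \<Rightarrow> 'a \<Rightarrow> 'a \<Rightarrow> bool" where
  "cayley_adj Gm S g h \<longleftrightarrow>
     g \<in> carrier Gm \<and> h \<in> carrier Gm \<and> inv\<^bsub>Gm\<^esub> g \<otimes>\<^bsub>Gm\<^esub> h \<in> S"

definition XG_conn :: "('a, 'm) monoid_scheme \<Rightarrow> ('a \<times> 'a) set" where
  "XG_conn G = {(s, \<one>\<^bsub>G\<^esub>) | s. s \<in> carrier G \<and> s \<noteq> \<one>\<^bsub>G\<^esub>}
             \<union> {(\<one>\<^bsub>G\<^esub>, s) | s. s \<in> carrier G \<and> s \<noteq> \<one>\<^bsub>G\<^esub>}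
             \<union> {(s, s) | s. s \<in> carrier G \<and> s \<noteq> \<one>\<^bsub>G\<^esub>}"

definition XG_vert :: "('a, 'm) monoid_scheme \<Rightarrow> ('a \<times> 'a) set" where
  "XG_vert G = carrier (G \<times>\<times> G)"

definition XG_adj :: "('a, 'm) monoid_scheme \<Rightarrow> 'a \<times> 'a \<Rightarrow> 'a \<times> 'a \<Rightarrow> bool" where
  "XG_adj G = cayley_adj (G \<times>\<times> G) (XG_conn G)"

definition nbhd :: "'v set \<Rightarrow> ('v \<Rightarrow> 'v \<Rightarrow> bool) \<Rightarrow> 'v \<Rightarrow> 'v set" where
  "nbhd V E x = {y \<in> V. E x y}"

definition strongly_regular ::
    "'v set \<Rightarrow> ('v \<Rightarrow> 'v \<Rightarrow> bool) \<Rightarrow> nat \<Rightarrow> nat \<Rightarrow> nat \<Rightarrow> nat \<Rightarrow> bool" where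
  "strongly_regular V E v k a c \<longleftrightarrow>
     finite V \<and> card V = v \<and>
     (\<forall>x\<in>V. card (nbhd V E x) = k) \<and>
     (\<exists>x\<in>V. \<exists>y\<in>V. x \<noteq> y \<and> \<not> E x y) \<and>
     (\<forall>x\<in>V. \<forall>y\<in>V. E x y \<longrightarrow> card (nbhd V E x \<inter> nbhd V E y) = a) \<and>
     (\<forall>x\<in>V. \<forall>y\<in>V. x \<noteq> y \<and> \<not> E x y \<longrightarrow> card (nbhd V E x \<inter> nbhd V E y) = c)"

definition graph_iso :: "'v set \<Rightarrow> ('v \<Rightarrow> 'v \<Rightarrow> bool) \<Rightarrow> 'w set \<Rightarrow> ('w \<Rightarrow> 'w \<Rightarrow> bool) \<Rightarrow> bool" where
  "graph_iso V E W F \<longleftrightarrow>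
     (\<exists>f. bij_betw f V W \<and> (\<forall>x\<in>V. \<forall>y\<in>V. E x y \<longleftrightarrow> F (f x) (f y)))"

definition num_inv2 :: "('a, 'm) monoid_scheme \<Rightarrow> nat" where
  "num_inv2 G = card {x \<in> carrier G. group.ord G x = 2}"

end

theory Submission
  imports Defs
begin


lemma ex3: "(\<exists>i<(3::nat). P i) \<longleftrightarrow> P 0 \<or> P 1 \<or> P 2"
  by (auto simp: less_Suc_eq numeral_3_eq_3 numeral_2_eq_2)

lemma all3: "(\<forall>i<(3::nat). P i) \<longleftrightarrow> P 0 \<and> P 1 \<and> P 2"
  by (auto simp: less_Suc_eq numeral_3_eq_3 numeral_2_eq_2)

lemma others:
  assumes "k < (3::nat)"
  shows "\<exists>i j. i < 3 \<and> j < 3 \<and> i \<noteq> j \<and> i \<noteq> k \<and> j \<noteq> k \<and> (\<forall>m<3. m = i \<or> m = j \<or> m = k)"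
proof -
  have "k = 0 \<or> k = 1 \<or> k = 2" using assms by auto
  then show ?thesis
  proof (elim disjE)
    assume "k = 0" then show ?thesis by (intro exI[of _ 1] exI[of _ 2]) auto
  next
    assume "k = 1" then show ?thesis by (intro exI[of _ 0] exI[of _ 2]) auto
  next
    assume "k = 2" then show ?thesis by (intro exI[of _ 0] exI[of _ 1]) auto
  qed
qed

lemma card_offdiag:
  assumes "finite A"
  shows "card {(c, d). c \<in> A \<and> d \<in> A \<and> c \<noteq> d} = card A * (card A - 1)"
proof -
  have e: "{(c, d). c \<in> A \<and> d \<in> A \<and> c \<noteq> d} = A \<times> A - (\<lambda>x. (x,x)) ` A" by auto
  have "card ((\<lambda>x. (x,x)) ` A) = card A" by (rule card_image) (auto simp: inj_on_def)
  moreover have "(\<lambda>x. (x,x)) ` A \<subseteq> A \<times> A" by auto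
  ultimately show ?thesis unfolding e using assms
    by (simp add: card_Diff_subset card_cartesian_product finite_imageI diff_mult_distrib2)
qed

locale latin3 =
  fixes V :: "'v set" and C :: "'c set" and p :: "nat \<Rightarrow> 'v \<Rightarrow> 'c"
  assumes finC: "finite C"
  and p_in: "\<And>v i. v \<in> V \<Longrightarrow> i < 3 \<Longrightarrow> p i v \<in> C"
  and inj2: "\<And>v w i j. v \<in> V \<Longrightarrow> w \<in> V \<Longrightarrow> i < 3 \<Longrightarrow> j < 3 \<Longrightarrow> i \<noteq> j
              \<Longrightarrow> p i v = p i w \<Longrightarrow> p j v = p j w \<Longrightarrow> v = w"
  and surj2: "\<And>a b i j. a \<in> C \<Longrightarrow> b \<in> C \<Longrightarrow> i < 3 \<Longrightarrow> j < 3 \<Longrightarrow> i \<noteq> j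
              \<Longrightarrow> \<exists>v\<in>V. p i v = a \<and> p j v = b"
begin

definition E where "E v w \<longleftrightarrow> v \<in> V \<and> w \<in> V \<and> v \<noteq> w \<and> (\<exists>i<3. p i v = p i w)"
definition pt where "pt i j a b = (THE v. v \<in> V \<and> p i v = a \<and> p j v = b)"
definition fib where "fib k a = {v \<in> V. p k v = a}"
definition cond where "cond a b \<longleftrightarrow> (\<exists>k i j. k < 3 \<and> i < 3 \<and> j < 3 \<and> i \<noteq> j \<and> i \<noteq> k \<and> j \<noteq> k
   \<and> p k a = p k b \<and> p k (pt i j (p i a) (p j b)) = p k (pt j i (p j a) (p i b)))"

abbreviation "N \<equiv> nbhd V E"
abbreviation "n \<equiv> card C"

lemma E_sym: "E v w \<Longrightarrow> E w v" unfolding E_def by auto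

lemma pt:
  assumes "a \<in> C" "b \<in> C" "i < 3" "j < 3" "i \<noteq> j"
  shows "pt i j a b \<in> V \<and> p i (pt i j a b) = a \<and> p j (pt i j a b) = b"
proof -
  obtain v where v: "v \<in> V" "p i v = a" "p j v = b" using surj2[OF assms] by blast
  show ?thesis unfolding pt_def
  proof (rule theI2[of _ v])
    show "v \<in> V \<and> p i v = a \<and> p j v = b" using v by simp
  next
    fix x assume "x \<in> V \<and> p i x = a \<and> p j x = b"
    then show "x = v" using inj2[of x v i j] v assms by auto
  next
    fix x assume "x \<in> V \<and> p i x = a \<and> p j x = b"
    then show "x \<in> V \<and> p i x = a \<and> p j x = b" .
  qed
qed

lemma pt_unique:
  assumes "v \<in> V" "i < 3" "j < 3" "i \<noteq> j"
  shows "pt i j (p i v) (p j v) = v"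
  using pt[OF p_in[OF assms(1,2)] p_in[OF assms(1,3)] assms(2-4)]
    inj2[of "pt i j (p i v) (p j v)" v i j] assms by auto

lemma finV: "finite V"
proof -
  have "inj_on (\<lambda>v. (p 0 v, p 1 v)) V" by (rule inj_onI) (use inj2[of _ _ 0 1] in simp)
  moreover have "(\<lambda>v. (p 0 v, p 1 v)) ` V \<subseteq> C \<times> C" using p_in by auto
  ultimately show ?thesis using finC by (meson finite_SigmaI finite_subset inj_on_finite)
qed

lemma cardV: "card V = n ^ 2"
proof -
  have "bij_betw (\<lambda>v. (p 0 v, p 1 v)) V (C \<times> C)"
    unfolding bij_betw_def
  proof
    show "inj_on (\<lambda>v. (p 0 v, p 1 v)) V" by (rule inj_onI) (use inj2[of _ _ 0 1] in simp)
    show "(\<lambda>v. (p 0 v, p 1 v)) ` V = C \<times> C"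
    proof
      show "(\<lambda>v. (p 0 v, p 1 v)) ` V \<subseteq> C \<times> C" using p_in by auto
      show "C \<times> C \<subseteq> (\<lambda>v. (p 0 v, p 1 v)) ` V"
      proof
        fix x assume "x \<in> C \<times> C"
        then obtain a b where "x = (a, b)" "a \<in> C" "b \<in> C" by auto
        then obtain v where "v \<in> V" "p 0 v = a" "p 1 v = b" using surj2[of a b 0 1] by auto
        then show "x \<in> (\<lambda>v. (p 0 v, p 1 v)) ` V" using \<open>x = (a,b)\<close> by auto
      qed
    qed
  qed
  then show ?thesis by (simp add: bij_betw_same_card card_cartesian_product power2_eq_square)
qed

lemma fib_card:
  assumes "k < 3" "a \<in> C"
  shows "card (fib k a) = n"
proof -
  define j where "j = (if k = 0 then 1 else (0::nat))"
  have j: "j < 3" "j \<noteq> k" unfolding j_def by auto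
  have "bij_betw (p j) (fib k a) C"
    unfolding bij_betw_def
  proof
    show "inj_on (p j) (fib k a)" unfolding inj_on_def fib_def using inj2 j assms by auto
    show "p j ` fib k a = C"
    proof
      show "p j ` fib k a \<subseteq> C" unfolding fib_def using p_in j by auto
      show "C \<subseteq> p j ` fib k a"
      proof
        fix b assume "b \<in> C"
        then obtain v where "v \<in> V" "p k v = a" "p j v = b" using surj2[of a b k j] j assms by auto
        then show "b \<in> p j ` fib k a" unfolding fib_def by auto
      qed
    qed
  qed
  then show ?thesis by (simp add: bij_betw_same_card)
qed

lemma fib_finite: "finite (fib k a)"
  using finV unfolding fib_def by auto

lemma nbhd_eq:
  assumes "v \<in> V"
  shows "N v = (fib 0 (p 0 v) - {v}) \<union> (fib 1 (p 1 v) - {v}) \<union> (fib 2 (p 2 v) - {v})"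
  unfolding nbhd_def E_def fib_def ex3 using assms by auto

lemma deg:
  assumes "v \<in> V"
  shows "card (N v) = 3 * n - 3"
proof -
  have d1: "(fib 0 (p 0 v) - {v}) \<inter> (fib 1 (p 1 v) - {v}) = {}"
    unfolding fib_def using inj2[of _ v 0 1] assms by auto
  have d2: "((fib 0 (p 0 v) - {v}) \<union> (fib 1 (p 1 v) - {v})) \<inter> (fib 2 (p 2 v) - {v}) = {}"
    unfolding fib_def using inj2[of _ v 0 2] inj2[of _ v 1 2] assms by auto
  have c: "k < 3 \<Longrightarrow> card (fib k (p k v) - {v}) = n - 1" for k
    using fib_card[of k "p k v"] p_in[OF assms, of k] assms
    by (simp add: fib_def)
  have f: "finite (fib k a - {v})" for k a using fib_finite by auto
  have "card (N v) = card ((fib 0 (p 0 v) - {v}) \<union> (fib 1 (p 1 v) - {v})) + card (fib 2 (p 2 v) - {v})"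
    unfolding nbhd_eq[OF assms] by (rule card_Un_disjoint[OF _ _ d2]) (use f in auto)
  also have "card ((fib 0 (p 0 v) - {v}) \<union> (fib 1 (p 1 v) - {v})) = card (fib 0 (p 0 v) - {v}) + card (fib 1 (p 1 v) - {v})"
    by (rule card_Un_disjoint[OF _ _ d1]) (use f in auto)
  finally have "card (N v) = (n - 1) + (n - 1) + (n - 1)" using c[of 0] c[of 1] c[of 2] by simp
  then show ?thesis by arith
qed


lemma E_eq: "E v w \<Longrightarrow> \<exists>k<3. p k v = p k w" unfolding E_def by auto

lemma exists_nonadj:
  assumes "n \<ge> 3"
  shows "\<exists>v\<in>V. \<exists>w\<in>V. v \<noteq> w \<and> \<not> E v w"
proof -
  from assms have "C \<noteq> {}" by auto
  then obtain c where c: "c \<in> C" by auto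
  then obtain v where v: "v \<in> V" using surj2[of c c 0 1] by auto
  have "card (C - {p 0 v}) \<ge> 2" using assms p_in[OF v, of 0] finC by (simp add: card_Diff_singleton)
  then have "C - {p 0 v} \<noteq> {}" by (intro notI) simp
  then obtain a where a: "a \<in> C" "a \<noteq> p 0 v" by blast
  define w1 where "w1 = pt 0 1 a (p 1 v)"
  define w2 where "w2 = pt 0 2 a (p 2 v)"
  have "card (fib 0 a - {w1, w2}) \<ge> card (fib 0 a) - card {w1,w2}"
    by (rule diff_card_le_card_Diff) auto
  moreover have "card {w1, w2} \<le> 2" by (simp add: card_insert_le_m1)
  ultimately have "card (fib 0 a - {w1, w2}) \<ge> 1" using fib_card[of 0 a] a assms by linarith
  then have "fib 0 a - {w1, w2} \<noteq> {}" by (intro notI) simp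
  then obtain w where w: "w \<in> fib 0 a" "w \<noteq> w1" "w \<noteq> w2" by blast
  have wV: "w \<in> V" "p 0 w = a" using w unfolding fib_def by auto
  have pw1: "w1 \<in> V" "p 0 w1 = a" "p 1 w1 = p 1 v" unfolding w1_def using pt[of a "p 1 v" 0 1] a p_in[OF v] by auto
  have pw2: "w2 \<in> V" "p 0 w2 = a" "p 2 w2 = p 2 v" unfolding w2_def using pt[of a "p 2 v" 0 2] a p_in[OF v] by auto
  have "p 1 w \<noteq> p 1 v" using inj2[of w w1 0 1] wV pw1 w by auto
  moreover have "p 2 w \<noteq> p 2 v" using inj2[of w w2 0 2] wV pw2 w by auto
  ultimately have "\<not> E v w" unfolding E_def ex3 using wV a by auto
  moreover have "v \<noteq> w" using wV a by auto
  ultimately show ?thesis using v wV by auto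
qed

lemma CN_nonadj:
  assumes v: "v \<in> V" and w: "w \<in> V" and vw: "v \<noteq> w" "\<not> E v w"
  shows "card (N v \<inter> N w) = 6"
proof -
  have ne: "i < 3 \<Longrightarrow> p i v \<noteq> p i w" for i using vw v w unfolding E_def by auto
  have ne': "i < 3 \<Longrightarrow> p i w \<noteq> p i v" for i using ne by metis
  define P6 where "P6 = {(i, j). i < (3::nat) \<and> j < 3 \<and> i \<noteq> j}"
  have P6: "P6 = {(0,1),(0,2),(1,0),(1,2),(2,0),(2,1)}"
    unfolding P6_def by (auto simp: less_Suc_eq numeral_3_eq_3 numeral_2_eq_2)
  have cP6: "card P6 = 6" unfolding P6 by simp
  define g where "g = (\<lambda>(i, j). pt i j (p i v) (p j w))"
  have gp: "(i, j) \<in> P6 \<Longrightarrow> g (i, j) \<in> V \<and> p i (g (i,j)) = p i v \<and> p j (g (i,j)) = p j w" for i j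
    unfolding g_def P6_def using pt p_in v w by auto
  have inj: "inj_on g P6"
  proof (rule inj_onI)
    fix x y assume x: "x \<in> P6" and y: "y \<in> P6" and gxy: "g x = g y"
    obtain i j where ij: "x = (i, j)" by force
    obtain i' j' where ij': "y = (i', j')" by force
    have r: "i < 3" "j < 3" "i \<noteq> j" "i' < 3" "j' < 3" "i' \<noteq> j'" using x y ij ij' P6_def by auto
    have c1: "p i (g x) = p i v" "p j (g x) = p j w" using gp x ij by auto
    have c2: "p i' (g x) = p i' v" "p j' (g x) = p j' w" using gp y ij' gxy by auto
    have gV: "g x \<in> V" using gp x ij by auto
    have "i = i'"
    proof (rule ccontr)
      assume "i \<noteq> i'"
      then have "g x = v" using inj2[OF gV v r(1) r(4) _ c1(1) c2(1)] by auto
      then show False using c1 ne r by auto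
    qed
    moreover have "j = j'"
    proof (rule ccontr)
      assume "j \<noteq> j'"
      then have "g x = w" using inj2[OF gV w r(2) r(5) _ c1(2) c2(2)] by auto
      then have "p i w = p i v" using c1(1) by simp
      then show False using ne[OF r(1)] by simp
    qed
    ultimately show "x = y" using ij ij' by simp
  qed
  have "N v \<inter> N w = g ` P6"
  proof
    show "N v \<inter> N w \<subseteq> g ` P6"
    proof
      fix c assume "c \<in> N v \<inter> N w"
      then have c: "c \<in> V" "E v c" "E w c" unfolding nbhd_def by auto
      obtain i where i: "i < 3" "p i v = p i c" using E_eq[OF c(2)] by auto
      obtain j where j: "j < 3" "p j w = p j c" using E_eq[OF c(3)] by auto
      have "i \<noteq> j"
      proof
        assume "i = j" then show False using i j ne[OF i(1)] by simp
      qed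
      then have "g (i, j) = c" unfolding g_def using pt_unique[OF c(1) i(1) j(1)] i j by simp
      moreover have "(i, j) \<in> P6" unfolding P6_def using i j \<open>i \<noteq> j\<close> by auto
      ultimately show "c \<in> g ` P6" by force
    qed
    show "g ` P6 \<subseteq> N v \<inter> N w"
    proof
      fix c assume "c \<in> g ` P6"
      then obtain i j where ij: "(i, j) \<in> P6" "c = g (i, j)" by force
      have r: "i < 3" "j < 3" "i \<noteq> j" using ij P6_def by auto
      have c: "c \<in> V" "p i c = p i v" "p j c = p j w" using gp[OF ij(1)] ij by auto
      have "c \<noteq> v"
      proof
        assume "c = v" then show False using c(3) ne[OF r(2)] by simp
      qed
      moreover have "c \<noteq> w"
      proof
        assume "c = w" then show False using c(2) ne'[OF r(1)] by simp
      qed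
      ultimately have "E v c" "E w c" unfolding E_def using c v w r by auto
      then show "c \<in> N v \<inter> N w" unfolding nbhd_def using c by auto
    qed
  qed
  then show ?thesis using card_image[OF inj] cP6 by simp
qed

lemma CN_adj_struct:
  assumes ab: "E a b" and k: "k < 3" "p k a = p k b"
    and ij: "i < 3" "j < 3" "i \<noteq> j" "i \<noteq> k" "j \<noteq> k" "\<forall>m<3. m = i \<or> m = j \<or> m = k"
  defines "u \<equiv> pt i j (p i a) (p j b)" and "u' \<equiv> pt j i (p j a) (p i b)"
    and "L \<equiv> fib k (p k a) - {a, b}"
  shows "N a \<inter> N b = L \<union> {u, u'}" and "u \<notin> L" "u' \<notin> L" "u \<noteq> u'"
    and "u \<in> V" "u' \<in> V" "p i u = p i a" "p j u = p j b" "p j u' = p j a" "p i u' = p i b"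
    and "\<And>c. c \<in> L \<Longrightarrow> \<not> E c u \<and> \<not> E c u'"
    and "E u u' \<longleftrightarrow> p k u = p k u'"
    and "\<And>c d. c \<in> L \<Longrightarrow> d \<in> L \<Longrightarrow> E c d \<longleftrightarrow> c \<noteq> d"
    and "card L = n - 2"
proof -
  have aV: "a \<in> V" and bV: "b \<in> V" and nab: "a \<noteq> b" using ab unfolding E_def by auto
  have ne: "m < 3 \<Longrightarrow> m \<noteq> k \<Longrightarrow> p m a \<noteq> p m b" for m using inj2[OF aV bV k(1), of m] k nab by auto
  show uu: "u \<in> V" "p i u = p i a" "p j u = p j b" unfolding u_def using pt p_in aV bV ij by auto
  show uu': "u' \<in> V" "p j u' = p j a" "p i u' = p i b" unfolding u'_def using pt p_in aV bV ij by auto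
  have ua: "u \<noteq> a" using uu(3) ne[of j] ij by auto
  have ub: "u \<noteq> b" using uu(2) ne[of i] ij by auto
  have u'a: "u' \<noteq> a" using uu'(3) ne[of i] ij by auto
  have u'b: "u' \<noteq> b" using uu'(2) ne[of j] ij by auto
  have uk: "p k u \<noteq> p k a" using inj2[OF uu(1) aV k(1) ij(1)] uu ua ij by auto
  have u'k: "p k u' \<noteq> p k a" using inj2[OF uu'(1) aV k(1) ij(2)] uu' u'a ij by auto
  show "u \<notin> L" unfolding L_def fib_def using uk by auto
  show "u' \<notin> L" unfolding L_def fib_def using u'k by auto
  show uu'ne: "u \<noteq> u'" using uu(2) uu'(3) ne[of i] ij by auto
  show "N a \<inter> N b = L \<union> {u, u'}"
  proof
    show "N a \<inter> N b \<subseteq> L \<union> {u, u'}"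
    proof
      fix c assume "c \<in> N a \<inter> N b"
      then have c: "c \<in> V" "E a c" "E b c" unfolding nbhd_def by auto
      have cab: "c \<noteq> a" "c \<noteq> b" using c unfolding E_def by auto
      obtain m where m: "m < 3" "p m a = p m c" using E_eq[OF c(2)] by auto
      obtain m' where m': "m' < 3" "p m' b = p m' c" using E_eq[OF c(3)] by auto
      show "c \<in> L \<union> {u, u'}"
      proof (cases "m = k \<or> m' = k")
        case True
        then have "p k c = p k a" using m m' k by auto
        then show ?thesis unfolding L_def fib_def using c cab by auto
      next
        case False
        then have "m \<noteq> m'" using m m' ne[of m] by auto
        then have "(m = i \<and> m' = j) \<or> (m = j \<and> m' = i)"
          using ij(6)[rule_format, OF m(1)] ij(6)[rule_format, OF m'(1)] False by auto
        then show ?thesis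
        proof
          assume "m = i \<and> m' = j"
          then have "c = u" using inj2[of c u i j] c uu m m' ij by auto
          then show ?thesis by auto
        next
          assume "m = j \<and> m' = i"
          then have "c = u'" using inj2[of c u' i j] c uu' m m' ij by auto
          then show ?thesis by auto
        qed
      qed
    qed
    show "L \<union> {u, u'} \<subseteq> N a \<inter> N b"
    proof
      fix c assume c: "c \<in> L \<union> {u, u'}"
      then have cV: "c \<in> V" unfolding L_def fib_def using uu uu' by auto
      have "E a c \<and> E b c"
        using c
      proof
        assume "c \<in> L"
        then show ?thesis unfolding L_def fib_def E_def using aV bV k by auto
      next
        assume "c \<in> {u, u'}"
        then show ?thesis
        proof
          assume "c = u"
          moreover have "E a u" unfolding E_def using aV uu ua ij(1) by auto
          moreover have "E b u" unfolding E_def using bV uu ub ij(2) by auto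
          ultimately show ?thesis by simp
        next
          assume "c \<in> {u'}"
          then have "c = u'" by simp
          moreover have "E a u'" unfolding E_def using aV uu' u'a ij(2) by auto
          moreover have "E b u'" unfolding E_def using bV uu' u'b ij(1) by auto
          ultimately show ?thesis by simp
        qed
      qed
      then show "c \<in> N a \<inter> N b" unfolding nbhd_def using cV aV bV by auto
    qed
  qed
  show "\<And>c. c \<in> L \<Longrightarrow> \<not> E c u \<and> \<not> E c u'"
  proof -
    fix c assume "c \<in> L"
    then have c: "c \<in> V" "p k c = p k a" "c \<noteq> a" "c \<noteq> b" unfolding L_def fib_def by auto
    have nu: "\<not> E c u"
    proof
      assume "E c u"
      then obtain m where m: "m < 3" "p m c = p m u" using E_eq by auto
      have "m = i \<or> m = j \<or> m = k" using m ij by auto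
      then show False
      proof (elim disjE)
        assume "m = i" then show False using inj2[of c a i k] c aV uu m ij k by auto
      next
        assume "m = j" then show False using inj2[of c b j k] c bV uu m ij k by auto
      next
        assume "m = k" then show False using c m uk by auto
      qed
    qed
    have nu': "\<not> E c u'"
    proof
      assume "E c u'"
      then obtain m where m: "m < 3" "p m c = p m u'" using E_eq by auto
      have "m = i \<or> m = j \<or> m = k" using m ij by auto
      then show False
      proof (elim disjE)
        assume "m = i" then show False using inj2[of c b i k] c bV uu' m ij k by auto
      next
        assume "m = j" then show False using inj2[of c a j k] c aV uu' m ij k by auto
      next
        assume "m = k" then show False using c m u'k by auto
      qed
    qed
    show "\<not> E c u \<and> \<not> E c u'" using nu nu' by auto
  qed
  show "E u u' \<longleftrightarrow> p k u = p k u'"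
  proof
    assume "E u u'"
    then obtain m where m: "m < 3" "p m u = p m u'" using E_eq by auto
    have "m = i \<or> m = j \<or> m = k" using m ij by auto
    then show "p k u = p k u'" using m uu uu' ne[of i] ne[of j] ij by auto
  next
    assume "p k u = p k u'"
    then show "E u u'" unfolding E_def using uu uu' uu'ne k by auto
  qed
  show "\<And>c d. c \<in> L \<Longrightarrow> d \<in> L \<Longrightarrow> E c d \<longleftrightarrow> c \<noteq> d"
    unfolding L_def fib_def E_def using k by auto
  have "a \<in> fib k (p k a)" "b \<in> fib k (p k a)" unfolding fib_def using aV bV k by auto
  then show "card L = n - 2" unfolding L_def
    using fib_card[OF k(1) p_in[OF aV k(1)]] nab fib_finite
    by (simp add: card_Diff_subset)
qed

lemma CN_adj:
  assumes ab: "E a b"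
  shows "card (N a \<inter> N b) = n"
proof -
  obtain k where k: "k < 3" "p k a = p k b" using E_eq[OF ab] by auto
  obtain i j where ij: "i < 3" "j < 3" "i \<noteq> j" "i \<noteq> k" "j \<noteq> k" "\<forall>m<3. m = i \<or> m = j \<or> m = k"
    using others[OF k(1)] by auto
  note S = CN_adj_struct[OF ab k ij]
  have aV: "a \<in> V" and bV: "b \<in> V" and nab: "a \<noteq> b" using ab unfolding E_def by auto
  have "{a, b} \<subseteq> fib k (p k a)" unfolding fib_def using aV bV k by auto
  then have "card {a, b} \<le> n" using fib_card[OF k(1) p_in[OF aV k(1)]] fib_finite card_mono by metis
  then have "n \<ge> 2" using nab by simp
  show ?thesis unfolding S(1) using S(2-4) S(14) \<open>n \<ge> 2\<close>
    by (simp add: fib_finite)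
qed

lemma cond_iff:
  assumes ab: "E a b" and k: "k < 3" "p k a = p k b"
    and ij: "i < 3" "j < 3" "i \<noteq> j" "i \<noteq> k" "j \<noteq> k" "\<forall>m<3. m = i \<or> m = j \<or> m = k"
  shows "cond a b \<longleftrightarrow> p k (pt i j (p i a) (p j b)) = p k (pt j i (p j a) (p i b))"
proof
  assume "cond a b"
  then obtain k' i' j' where c: "k' < 3" "i' < 3" "j' < 3" "i' \<noteq> j'" "i' \<noteq> k'" "j' \<noteq> k'"
    "p k' a = p k' b" "p k' (pt i' j' (p i' a) (p j' b)) = p k' (pt j' i' (p j' a) (p i' b))"
    unfolding cond_def by blast
  have aV: "a \<in> V" and bV: "b \<in> V" and nab: "a \<noteq> b" using ab unfolding E_def by auto
  have "k' = k"
  proof (rule ccontr)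
    assume "k' \<noteq> k" then show False using inj2[OF aV bV k(1) c(1)] k c(7) nab by auto
  qed
  then have "(i' = i \<and> j' = j) \<or> (i' = j \<and> j' = i)"
    using ij(6)[rule_format, OF c(2)] ij(6)[rule_format, OF c(3)] c(4-6) by auto
  then show "p k (pt i j (p i a) (p j b)) = p k (pt j i (p j a) (p i b))"
    using c(8) \<open>k' = k\<close> by auto
next
  assume "p k (pt i j (p i a) (p j b)) = p k (pt j i (p j a) (p i b))"
  then show "cond a b" unfolding cond_def using k ij by blast
qed

lemma inner_count:
  assumes ab: "E a b"
  shows "card {(c, d). c \<in> N a \<inter> N b \<and> d \<in> N a \<inter> N b \<and> E c d}
         = (n - 2) * (n - 3) + (if cond a b then 2 else 0)"
proof -
  obtain k where k: "k < 3" "p k a = p k b" using E_eq[OF ab] by auto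
  obtain i j where ij: "i < 3" "j < 3" "i \<noteq> j" "i \<noteq> k" "j \<noteq> k" "\<forall>m<3. m = i \<or> m = j \<or> m = k"
    using others[OF k(1)] by auto
  define u where "u = pt i j (p i a) (p j b)"
  define u' where "u' = pt j i (p j a) (p i b)"
  define L where "L = fib k (p k a) - {a, b}"
  note S = CN_adj_struct[OF ab k ij, folded u_def u'_def L_def]
  have ci: "cond a b \<longleftrightarrow> E u u'" using cond_iff[OF ab k ij] S(12) unfolding u_def u'_def by simp
  have Eu: "E u u \<longleftrightarrow> False" "E u' u' \<longleftrightarrow> False" unfolding E_def by auto
  have Es: "E u' u \<longleftrightarrow> E u u'" using E_sym by blast
  have fL: "finite L" unfolding L_def using fib_finite by auto
  have eq: "{(c, d). c \<in> N a \<inter> N b \<and> d \<in> N a \<inter> N b \<and> E c d}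
     = {(c, d). c \<in> L \<and> d \<in> L \<and> c \<noteq> d} \<union> (if E u u' then {(u, u'), (u', u)} else {})"
  proof
    show "{(c, d). c \<in> N a \<inter> N b \<and> d \<in> N a \<inter> N b \<and> E c d}
      \<subseteq> {(c, d). c \<in> L \<and> d \<in> L \<and> c \<noteq> d} \<union> (if E u u' then {(u, u'), (u', u)} else {})"
    proof
      fix z assume "z \<in> {(c, d). c \<in> N a \<inter> N b \<and> d \<in> N a \<inter> N b \<and> E c d}"
      then obtain c d where z: "z = (c, d)" "c \<in> L \<union> {u, u'}" "d \<in> L \<union> {u, u'}" "E c d"
        unfolding S(1) by blast
      show "z \<in> {(c, d). c \<in> L \<and> d \<in> L \<and> c \<noteq> d} \<union> (if E u u' then {(u, u'), (u', u)} else {})"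
      proof (cases "c \<in> L")
        case cL: True
        show ?thesis
        proof (cases "d \<in> L")
          case True then show ?thesis using cL z S(13) by auto
        next
          case False then have "d = u \<or> d = u'" using z by auto
          then show ?thesis using S(11)[OF cL] z by auto
        qed
      next
        case cL: False
        then have cu: "c = u \<or> c = u'" using z by auto
        show ?thesis
        proof (cases "d \<in> L")
          case True then show ?thesis using S(11)[OF True] cu z E_sym by blast
        next
          case False then have "d = u \<or> d = u'" using z by auto
          then show ?thesis using cu z Eu Es by auto
        qed
      qed
    qed
    show "{(c, d). c \<in> L \<and> d \<in> L \<and> c \<noteq> d} \<union> (if E u u' then {(u, u'), (u', u)} else {})
      \<subseteq> {(c, d). c \<in> N a \<inter> N b \<and> d \<in> N a \<inter> N b \<and> E c d}"
      unfolding S(1) using S(13) Es by auto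
  qed
  have disj: "{(c, d). c \<in> L \<and> d \<in> L \<and> c \<noteq> d} \<inter> {(u, u'), (u', u)} = {}" using S(2,3) by auto
  have c2: "card {(u, u'), (u', u)} = 2" using S(4) by auto
  have fO: "finite {(c, d). c \<in> L \<and> d \<in> L \<and> c \<noteq> d}"
    by (rule finite_subset[of _ "L \<times> L"]) (use fL in auto)
  show ?thesis
  proof (cases "E u u'")
    case True
    then show ?thesis unfolding eq ci
      using card_Un_disjoint[OF fO _ disj] card_offdiag[OF fL] S(14) c2 by simp
  next
    case False
    then show ?thesis unfolding eq ci
      using card_offdiag[OF fL] S(14) by simp
  qed
qed

definition Tloc where "Tloc a = (\<Sum>b\<in>N a. card {(c, d). c \<in> N a \<inter> N b \<and> d \<in> N a \<inter> N b \<and> E c d})"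

lemma Tloc_eq:
  assumes aV: "a \<in> V"
  shows "Tloc a = (3 * n - 3) * ((n - 2) * (n - 3)) + 2 * card {b \<in> N a. cond a b}"
proof -
  have fN: "finite (N a)" using finV unfolding nbhd_def by auto
  have "Tloc a = (\<Sum>b\<in>N a. (n - 2) * (n - 3) + (if cond a b then 2 else 0))"
    unfolding Tloc_def
  proof (rule sum.cong[OF refl])
    fix b assume "b \<in> N a"
    then have "E a b" by (simp add: nbhd_def)
    then show "card {(c, d). c \<in> N a \<inter> N b \<and> d \<in> N a \<inter> N b \<and> E c d}
         = (n - 2) * (n - 3) + (if cond a b then 2 else 0)" by (rule inner_count)
  qed
  also have "\<dots> = card (N a) * ((n - 2) * (n - 3)) + (\<Sum>b\<in>N a. if cond a b then 2 else 0)"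
    by (simp add: sum.distrib)
  also have "(\<Sum>b\<in>N a. if cond a b then 2 else 0) = (\<Sum>b\<in>{b \<in> N a. cond a b}. 2)"
    by (rule sum.inter_filter[OF fN, symmetric])
  also have "\<dots> = 2 * card {b \<in> N a. cond a b}" by simp
  finally show ?thesis using deg[OF aV] by simp
qed


end


definition pG :: "('a, 'm) monoid_scheme \<Rightarrow> nat \<Rightarrow> 'a \<times> 'a \<Rightarrow> 'a" where
  "pG G i v = (if i = 0 then fst v else if i = 1 then snd v else snd v \<otimes>\<^bsub>G\<^esub> inv\<^bsub>G\<^esub> fst v)"

lemma lt3: "i < (3::nat) \<Longrightarrow> i = 0 \<or> i = 1 \<or> i = 2" by auto

context group
begin

lemma canc1: "t \<in> carrier G \<Longrightarrow> z \<in> carrier G \<Longrightarrow> t \<otimes> (inv t \<otimes> z) = z"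
proof -
  assume a: "t \<in> carrier G" "z \<in> carrier G"
  have "t \<otimes> (inv t \<otimes> z) = (t \<otimes> inv t) \<otimes> z" using a by (simp only: m_assoc inv_closed)
  also have "\<dots> = z" using a by simp
  finally show ?thesis .
qed
lemma canc2: "t \<in> carrier G \<Longrightarrow> z \<in> carrier G \<Longrightarrow> inv t \<otimes> (t \<otimes> z) = z"
proof -
  assume a: "t \<in> carrier G" "z \<in> carrier G"
  have "inv t \<otimes> (t \<otimes> z) = (inv t \<otimes> t) \<otimes> z" using a by (simp only: m_assoc inv_closed)
  also have "\<dots> = z" using a by simp
  finally show ?thesis .
qed

lemma lcanc: "c \<in> carrier G \<Longrightarrow> a \<in> carrier G \<Longrightarrow> b \<in> carrier G \<Longrightarrow> c \<otimes> a = c \<otimes> b \<longleftrightarrow> a = b"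
  by simp

lemma inv_eq_iff: "a \<in> carrier G \<Longrightarrow> b \<in> carrier G \<Longrightarrow> inv a = inv b \<longleftrightarrow> a = b"
proof
  assume c: "a \<in> carrier G" "b \<in> carrier G" and "inv a = inv b"
  then have "inv (inv a) = inv (inv b)" by simp
  then show "a = b" using c by simp
qed simp

lemma eq1: "x \<in> carrier G \<Longrightarrow> x' \<in> carrier G \<Longrightarrow> inv x \<otimes> x' = \<one> \<longleftrightarrow> x' = x"
  using inv_solve_left'[of "\<one>" x x'] by simp

lemma g3: "x \<in> carrier G \<Longrightarrow> x' \<in> carrier G \<Longrightarrow> y \<in> carrier G \<Longrightarrow> y' \<in> carrier G \<Longrightarrow>
   inv x \<otimes> x' = inv y \<otimes> y' \<longleftrightarrow> y \<otimes> inv x = y' \<otimes> inv x'"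
proof -
  assume c: "x \<in> carrier G" "x' \<in> carrier G" "y \<in> carrier G" "y' \<in> carrier G"
  have "inv x \<otimes> x' = inv y \<otimes> y' \<longleftrightarrow> y' = y \<otimes> (inv x \<otimes> x')"
    using inv_solve_left[of "inv x \<otimes> x'" y y'] c by auto
  also have "\<dots> \<longleftrightarrow> y' = (y \<otimes> inv x) \<otimes> x'" using c by (simp add: m_assoc)
  also have "\<dots> \<longleftrightarrow> y \<otimes> inv x = y' \<otimes> inv x'"
    using inv_solve_right[of "y \<otimes> inv x" y' x'] c by auto
  finally show ?thesis .
qed

lemma ord2_iff:
  assumes fin: "finite (carrier G)" and t: "t \<in> carrier G"
  shows "ord t = 2 \<longleftrightarrow> t \<noteq> \<one> \<and> inv t = t"
proof -
  have sq: "t [^] (2::nat) = t \<otimes> t" using t by (simp add: numeral_2_eq_2)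
  have it: "inv t = t \<longleftrightarrow> t \<otimes> t = \<one>"
  proof
    assume "inv t = t" then show "t \<otimes> t = \<one>" using r_inv[OF t] by simp
  next
    assume "t \<otimes> t = \<one>" then show "inv t = t" using inv_equality[of t t] t by simp
  qed
  show ?thesis
  proof
    assume o: "ord t = 2"
    then have "t [^] (2::nat) = \<one>" using pow_eq_id[OF t] by simp
    moreover have "t \<noteq> \<one>" using o ord_eq_1[OF t] by auto
    ultimately show "t \<noteq> \<one> \<and> inv t = t" using sq it by simp
  next
    assume a: "t \<noteq> \<one> \<and> inv t = t"
    then have "t [^] (2::nat) = \<one>" using sq it by simp
    then have d: "ord t dvd 2" using pow_eq_id[OF t] by simp
    have "ord t \<noteq> 1" using a ord_eq_1[OF t] by auto
    moreover have "ord t \<le> 2" using d by (rule dvd_imp_le) simp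
    moreover have "ord t \<noteq> 0" using d by (intro notI) simp
    ultimately show "ord t = 2" by linarith
  qed
qed

lemma latin_G: "latin3 (carrier G \<times> carrier G) (carrier G) (pG G)" if fin: "finite (carrier G)"
proof
  show "finite (carrier G)" by fact
  show "\<And>v i. v \<in> carrier G \<times> carrier G \<Longrightarrow> i < 3 \<Longrightarrow> pG G i v \<in> carrier G"
    by (auto simp: pG_def)
  show "v = w" if v: "v \<in> carrier G \<times> carrier G" and w: "w \<in> carrier G \<times> carrier G"
    and ij: "i < 3" "j < 3" "i \<noteq> j" and e: "pG G i v = pG G i w" "pG G j v = pG G j w" for v w i j
  proof -
    obtain x y where xy: "v = (x, y)" "x \<in> carrier G" "y \<in> carrier G" using v by auto
    obtain x' y' where xy': "w = (x', y')" "x' \<in> carrier G" "y' \<in> carrier G" using w by auto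
    have A: "y \<otimes> inv x = y' \<otimes> inv x \<Longrightarrow> y = y'" using xy xy' by simp
    have B: "y \<otimes> inv x = y \<otimes> inv x' \<Longrightarrow> x = x'" using xy xy' lcanc inv_eq_iff by simp
    from lt3[OF ij(1)] lt3[OF ij(2)] ij(3) e show ?thesis
      unfolding pG_def xy xy' using A B by auto
  qed
  show "\<exists>v\<in>carrier G \<times> carrier G. pG G i v = a \<and> pG G j v = b"
    if ab: "a \<in> carrier G" "b \<in> carrier G" and ij: "i < 3" "j < 3" "i \<noteq> j" for a b i j
  proof -
    have w02: "(b \<otimes> a) \<otimes> inv a = b" using ab by (simp add: m_assoc)
    have w20: "(a \<otimes> b) \<otimes> inv b = a" using ab by (simp add: m_assoc)
    have w12: "a \<otimes> inv (inv b \<otimes> a) = b" using ab by (simp add: inv_mult_group canc1)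
    have w21: "b \<otimes> inv (inv a \<otimes> b) = a" using ab by (simp add: inv_mult_group canc1)
    from lt3[OF ij(1)] lt3[OF ij(2)] ij(3) show ?thesis
    proof (elim disjE)
      assume "i = 0" "j = 1" then show ?thesis using ab by (intro bexI[of _ "(a, b)"]) (auto simp: pG_def)
    next
      assume "i = 0" "j = 2" then show ?thesis using ab w02 by (intro bexI[of _ "(a, b \<otimes> a)"]) (auto simp: pG_def)
    next
      assume "i = 1" "j = 0" then show ?thesis using ab by (intro bexI[of _ "(b, a)"]) (auto simp: pG_def)
    next
      assume "i = 1" "j = 2" then show ?thesis using ab w12 by (intro bexI[of _ "(inv b \<otimes> a, a)"]) (auto simp: pG_def)
    next
      assume "i = 2" "j = 0" then show ?thesis using ab w20 by (intro bexI[of _ "(b, a \<otimes> b)"]) (auto simp: pG_def)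
    next
      assume "i = 2" "j = 1" then show ?thesis using ab w21 by (intro bexI[of _ "(inv a \<otimes> b, b)"]) (auto simp: pG_def)
    qed auto
  qed
qed

end

locale fgroup = group + assumes finG: "finite (carrier G)"

sublocale fgroup \<subseteq> L: latin3 "carrier G \<times> carrier G" "carrier G" "pG G"
  by (rule latin_G[OF finG])

definition Tinv :: "'v set \<Rightarrow> ('v \<Rightarrow> 'v \<Rightarrow> bool) \<Rightarrow> nat" where
  "Tinv V E = (\<Sum>a\<in>V. \<Sum>b\<in>nbhd V E a. card {(c, d). c \<in> nbhd V E a \<inter> nbhd V E b \<and> d \<in> nbhd V E a \<inter> nbhd V E b \<and> E c d})"

lemma Tinv_iso:
  assumes "graph_iso V E W F"
  shows "Tinv V E = Tinv W F"
proof -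
  obtain f where bij: "bij_betw f V W" and hom: "\<forall>x\<in>V. \<forall>y\<in>V. E x y \<longleftrightarrow> F (f x) (f y)"
    using assms unfolding graph_iso_def by blast
  have inj: "inj_on f V" and img: "f ` V = W" using bij unfolding bij_betw_def by auto
  have nbs: "nbhd V E a \<subseteq> V" for a unfolding nbhd_def by auto
  have nb: "nbhd W F (f a) = f ` nbhd V E a" if a: "a \<in> V" for a
  proof
    show "nbhd W F (f a) \<subseteq> f ` nbhd V E a"
    proof
      fix y' assume "y' \<in> nbhd W F (f a)"
      then have y': "y' \<in> W" "F (f a) y'" unfolding nbhd_def by auto
      then obtain y where y: "y \<in> V" "y' = f y" using img by auto
      then have "E a y" using hom a y' by auto
      then show "y' \<in> f ` nbhd V E a" using y unfolding nbhd_def by auto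
    qed
    show "f ` nbhd V E a \<subseteq> nbhd W F (f a)"
      unfolding nbhd_def using hom a img by auto
  qed
  have bnb: "bij_betw f (nbhd V E a) (nbhd W F (f a))" if a: "a \<in> V" for a
    unfolding bij_betw_def nb[OF a] using inj_on_subset[OF inj nbs] by simp
  have inner: "card {(c, d). c \<in> nbhd W F (f a) \<inter> nbhd W F (f b) \<and> d \<in> nbhd W F (f a) \<inter> nbhd W F (f b) \<and> F c d}
     = card {(c, d). c \<in> nbhd V E a \<inter> nbhd V E b \<and> d \<in> nbhd V E a \<inter> nbhd V E b \<and> E c d}"
    if a: "a \<in> V" and b: "b \<in> V" for a b
  proof -
    define S where "S = nbhd V E a \<inter> nbhd V E b"
    have SV: "S \<subseteq> V" unfolding S_def using nbs by auto
    have fS: "nbhd W F (f a) \<inter> nbhd W F (f b) = f ` S"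
      unfolding nb[OF a] nb[OF b] S_def by (rule inj_on_image_Int[OF inj nbs nbs, symmetric])
    have eq: "{(c, d). c \<in> f ` S \<and> d \<in> f ` S \<and> F c d} = map_prod f f ` {(c, d). c \<in> S \<and> d \<in> S \<and> E c d}"
    proof
      show "{(c, d). c \<in> f ` S \<and> d \<in> f ` S \<and> F c d} \<subseteq> map_prod f f ` {(c, d). c \<in> S \<and> d \<in> S \<and> E c d}"
      proof
        fix z assume "z \<in> {(c, d). c \<in> f ` S \<and> d \<in> f ` S \<and> F c d}"
        then obtain c d where z: "z = (f c, f d)" "c \<in> S" "d \<in> S" "F (f c) (f d)" by auto
        then have "E c d" using hom SV by auto
        then show "z \<in> map_prod f f ` {(c, d). c \<in> S \<and> d \<in> S \<and> E c d}" using z by force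
      qed
      show "map_prod f f ` {(c, d). c \<in> S \<and> d \<in> S \<and> E c d} \<subseteq> {(c, d). c \<in> f ` S \<and> d \<in> f ` S \<and> F c d}"
        using hom SV by auto
    qed
    have "inj_on (map_prod f f) {(c, d). c \<in> S \<and> d \<in> S \<and> E c d}"
      by (rule inj_on_subset[OF map_prod_inj_on[OF inj inj]]) (use SV in auto)
    then show ?thesis unfolding fS eq S_def[symmetric] by (rule card_image)
  qed
  have "Tinv W F = (\<Sum>a\<in>V. \<Sum>b\<in>nbhd W F (f a). card {(c, d). c \<in> nbhd W F (f a) \<inter> nbhd W F b \<and> d \<in> nbhd W F (f a) \<inter> nbhd W F b \<and> F c d})"
    unfolding Tinv_def by (rule sum.reindex_bij_betw[OF bij, symmetric])
  also have "\<dots> = (\<Sum>a\<in>V. \<Sum>b\<in>nbhd V E a. card {(c, d). c \<in> nbhd W F (f a) \<inter> nbhd W F (f b) \<and> d \<in> nbhd W F (f a) \<inter> nbhd W F (f b) \<and> F c d})"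
    by (rule sum.cong[OF refl], rule sum.reindex_bij_betw[OF bnb, symmetric])
  also have "\<dots> = Tinv V E"
    unfolding Tinv_def
    by (rule sum.cong[OF refl], rule sum.cong[OF refl]) (use inner nbs in blast)
  finally show ?thesis by simp
qed

lemma card3:
  assumes "finite A" "inj_on f A" "inj_on g A" "inj_on h A"
    "f ` A \<inter> g ` A = {}" "f ` A \<inter> h ` A = {}" "g ` A \<inter> h ` A = {}"
  shows "card (f ` A \<union> g ` A \<union> h ` A) = 3 * card A"
proof -
  have d: "(f ` A \<union> g ` A) \<inter> h ` A = {}" using assms by auto
  have "card (f ` A \<union> g ` A \<union> h ` A) = card (f ` A \<union> g ` A) + card (h ` A)"
    by (rule card_Un_disjoint[OF _ _ d]) (use assms in auto)
  also have "card (f ` A \<union> g ` A) = card (f ` A) + card (g ` A)"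
    by (rule card_Un_disjoint) (use assms in auto)
  finally show ?thesis using assms by (simp add: card_image)
qed

context fgroup
begin

abbreviation "VV \<equiv> carrier G \<times> carrier G"

lemma pG_simps: "pG G 0 v = fst v" "pG G 1 v = snd v" "pG G 2 v = snd v \<otimes> inv fst v" "pG G (Suc 0) v = snd v"
  by (simp_all add: pG_def)

lemma idB: "x \<in> carrier G \<Longrightarrow> y \<in> carrier G \<Longrightarrow> t \<in> carrier G \<Longrightarrow> (y \<otimes> t) \<otimes> inv (x \<otimes> t) = y \<otimes> inv x"
  by (simp add: inv_mult_group m_assoc canc1)

lemma ptu: "v \<in> VV \<Longrightarrow> i < 3 \<Longrightarrow> j < 3 \<Longrightarrow> i \<noteq> j \<Longrightarrow> a = pG G i v \<Longrightarrow> b = pG G j v \<Longrightarrow> L.pt i j a b = v"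
  using L.pt_unique by simp

lemma all3': "\<forall>m<3. m = (1::nat) \<or> m = 2 \<or> m = 0" "\<forall>m<3. m = (0::nat) \<or> m = 2 \<or> m = 1" "\<forall>m<3. m = (0::nat) \<or> m = 1 \<or> m = 2"
  by auto

lemma cls0:
  assumes c: "x \<in> carrier G" "y \<in> carrier G" "t \<in> carrier G" and t1: "t \<noteq> \<one>"
  shows "L.E (x, y) (x, y \<otimes> t) \<and> (L.cond (x, y) (x, y \<otimes> t) \<longleftrightarrow> inv t = t)"
proof -
  have ne: "(x, y) \<noteq> (x, y \<otimes> t)" using c t1 by simp
  have E: "L.E (x, y) (x, y \<otimes> t)" unfolding L.E_def using c ne by (auto simp: pG_simps intro!: exI[of _ 0])
  have u: "L.pt 1 2 (pG G 1 (x, y)) (pG G 2 (x, y \<otimes> t)) = (x \<otimes> inv t, y)"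
    by (rule ptu) (use c in \<open>auto simp: pG_simps inv_mult_group m_assoc\<close>)
  have u': "L.pt 2 1 (pG G 2 (x, y)) (pG G 1 (x, y \<otimes> t)) = (x \<otimes> t, y \<otimes> t)"
    by (rule ptu) (use c idB in \<open>auto simp: pG_simps\<close>)
  have "L.cond (x, y) (x, y \<otimes> t) \<longleftrightarrow> pG G 0 (L.pt 1 2 (pG G 1 (x, y)) (pG G 2 (x, y \<otimes> t))) = pG G 0 (L.pt 2 1 (pG G 2 (x, y)) (pG G 1 (x, y \<otimes> t)))"
    by (rule L.cond_iff[OF E]) (auto simp: pG_simps)
  also have "\<dots> \<longleftrightarrow> pG G 0 (x \<otimes> inv t, y) = pG G 0 (x \<otimes> t, y \<otimes> t)" by (simp only: u u')
  also have "\<dots> \<longleftrightarrow> x \<otimes> inv t = x \<otimes> t" by (simp add: pG_simps)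
  also have "\<dots> \<longleftrightarrow> inv t = t" using c by (simp add: lcanc)
  finally show ?thesis using E by simp
qed

lemma cls1:
  assumes c: "x \<in> carrier G" "y \<in> carrier G" "t \<in> carrier G" and t1: "t \<noteq> \<one>"
  shows "L.E (x, y) (x \<otimes> t, y) \<and> (L.cond (x, y) (x \<otimes> t, y) \<longleftrightarrow> inv t = t)"
proof -
  have ne: "(x, y) \<noteq> (x \<otimes> t, y)" using c t1 by simp
  have E: "L.E (x, y) (x \<otimes> t, y)" unfolding L.E_def using c ne by (auto simp: pG_simps intro!: exI[of _ 1])
  have u: "L.pt 0 2 (pG G 0 (x, y)) (pG G 2 (x \<otimes> t, y)) = (x, y \<otimes> inv t)"
    by (rule ptu) (use c in \<open>auto simp: pG_simps inv_mult_group m_assoc\<close>)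
  have u': "L.pt 2 0 (pG G 2 (x, y)) (pG G 0 (x \<otimes> t, y)) = (x \<otimes> t, y \<otimes> t)"
    by (rule ptu) (use c idB in \<open>auto simp: pG_simps\<close>)
  have "L.cond (x, y) (x \<otimes> t, y) \<longleftrightarrow> pG G 1 (L.pt 0 2 (pG G 0 (x, y)) (pG G 2 (x \<otimes> t, y))) = pG G 1 (L.pt 2 0 (pG G 2 (x, y)) (pG G 0 (x \<otimes> t, y)))"
    by (rule L.cond_iff[OF E]) (auto simp: pG_simps)
  also have "\<dots> \<longleftrightarrow> pG G 1 (x, y \<otimes> inv t) = pG G 1 (x \<otimes> t, y \<otimes> t)" by (simp only: u u')
  also have "\<dots> \<longleftrightarrow> y \<otimes> inv t = y \<otimes> t" by (simp add: pG_simps)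
  also have "\<dots> \<longleftrightarrow> inv t = t" using c by (simp add: lcanc)
  finally show ?thesis using E by simp
qed

lemma cls2:
  assumes c: "x \<in> carrier G" "y \<in> carrier G" "t \<in> carrier G" and t1: "t \<noteq> \<one>"
  shows "L.E (x, y) (x \<otimes> t, y \<otimes> t) \<and> (L.cond (x, y) (x \<otimes> t, y \<otimes> t) \<longleftrightarrow> inv t = t)"
proof -
  have ne: "(x, y) \<noteq> (x \<otimes> t, y \<otimes> t)" using c t1 by simp
  have E: "L.E (x, y) (x \<otimes> t, y \<otimes> t)" unfolding L.E_def using c ne idB
    by (auto simp: pG_simps intro!: exI[of _ 2])
  have u: "L.pt 0 1 (pG G 0 (x, y)) (pG G 1 (x \<otimes> t, y \<otimes> t)) = (x, y \<otimes> t)"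
    by (rule ptu) (use c in \<open>auto simp: pG_simps\<close>)
  have u': "L.pt 1 0 (pG G 1 (x, y)) (pG G 0 (x \<otimes> t, y \<otimes> t)) = (x \<otimes> t, y)"
    by (rule ptu) (use c in \<open>auto simp: pG_simps\<close>)
  have p2: "pG G 2 (x, y) = pG G 2 (x \<otimes> t, y \<otimes> t)" using c idB by (simp add: pG_simps)
  have "L.cond (x, y) (x \<otimes> t, y \<otimes> t) \<longleftrightarrow> pG G 2 (L.pt 0 1 (pG G 0 (x, y)) (pG G 1 (x \<otimes> t, y \<otimes> t))) = pG G 2 (L.pt 1 0 (pG G 1 (x, y)) (pG G 0 (x \<otimes> t, y \<otimes> t)))"
    by (rule L.cond_iff[OF E]) (use p2 in \<open>auto simp: pG_simps\<close>)
  also have "\<dots> \<longleftrightarrow> pG G 2 (x, y \<otimes> t) = pG G 2 (x \<otimes> t, y)" by (simp only: u u')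
  also have "\<dots> \<longleftrightarrow> (y \<otimes> t) \<otimes> inv x = y \<otimes> inv (x \<otimes> t)" by (simp add: pG_simps)
  also have "\<dots> \<longleftrightarrow> y \<otimes> (t \<otimes> inv x) = y \<otimes> (inv t \<otimes> inv x)"
    using c by (simp add: m_assoc inv_mult_group)
  also have "\<dots> \<longleftrightarrow> t = inv t" using c by (simp add: lcanc)
  finally show ?thesis using E by auto
qed

lemma cond_count:
  assumes a: "a \<in> VV"
  shows "card {b \<in> L.N a. L.cond a b} = 3 * num_inv2 G"
proof -
  obtain x y where xy: "a = (x, y)" "x \<in> carrier G" "y \<in> carrier G" using a by auto
  define f0 where "f0 = (\<lambda>t. (x, y \<otimes> t))"
  define f1 where "f1 = (\<lambda>t. (x \<otimes> t, y))"
  define f2 where "f2 = (\<lambda>t. (x \<otimes> t, y \<otimes> t))"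
  define Ct where "Ct = carrier G - {\<one>}"
  define I where "I = {t \<in> Ct. inv t = t}"
  have IC: "I \<subseteq> Ct" unfolding I_def by auto
  have fCt: "finite Ct" unfolding Ct_def using finG by auto
  have inj: "inj_on f0 A" "inj_on f1 A" "inj_on f2 A" if "A \<subseteq> Ct" for A
  proof -
    have AC: "\<And>z. z \<in> A \<Longrightarrow> z \<in> carrier G" using that unfolding Ct_def by auto
    show "inj_on f0 A" "inj_on f1 A" "inj_on f2 A"
      using xy AC unfolding f0_def f1_def f2_def inj_on_def by auto
  qed
  have disj: "f0 ` A \<inter> f1 ` A = {}" "f0 ` A \<inter> f2 ` A = {}" "f1 ` A \<inter> f2 ` A = {}" if "A \<subseteq> Ct" for A
    using that xy unfolding f0_def f1_def f2_def Ct_def by auto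
  have cU: "card (f0 ` A \<union> f1 ` A \<union> f2 ` A) = 3 * card A" if "A \<subseteq> Ct" for A
    using card3[OF finite_subset[OF that fCt] inj[OF that] disj[OF that]] .
  have Eall: "t \<in> Ct \<Longrightarrow> L.E a (f0 t) \<and> L.E a (f1 t) \<and> L.E a (f2 t)" for t
    unfolding Ct_def f0_def f1_def f2_def xy using cls0 cls1 cls2 xy by auto
  have sub: "f0 ` Ct \<union> f1 ` Ct \<union> f2 ` Ct \<subseteq> L.N a"
    unfolding nbhd_def using Eall unfolding L.E_def by blast
  have fN: "finite (L.N a)" using L.finV unfolding nbhd_def by auto
  have "card (f0 ` Ct \<union> f1 ` Ct \<union> f2 ` Ct) = 3 * card (carrier G) - 3"
    using cU[of Ct] finG unfolding Ct_def by (simp add: card_Diff_singleton)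
  then have NU: "L.N a = f0 ` Ct \<union> f1 ` Ct \<union> f2 ` Ct"
    using card_subset_eq[OF fN sub] L.deg[OF a] by simp
  have cnd: "t \<in> Ct \<Longrightarrow> (L.cond a (f0 t) \<longleftrightarrow> inv t = t) \<and> (L.cond a (f1 t) \<longleftrightarrow> inv t = t) \<and> (L.cond a (f2 t) \<longleftrightarrow> inv t = t)" for t
    unfolding Ct_def f0_def f1_def f2_def xy using cls0 cls1 cls2 xy by auto
  have "{b \<in> L.N a. L.cond a b} = f0 ` I \<union> f1 ` I \<union> f2 ` I"
    unfolding NU I_def using cnd by auto
  then have "card {b \<in> L.N a. L.cond a b} = 3 * card I" using cU[OF IC] by simp
  moreover have "I = {t \<in> carrier G. ord t = 2}" unfolding I_def Ct_def using ord2_iff[OF finG] by auto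
  ultimately show ?thesis unfolding num_inv2_def by simp
qed

lemma XG_vert_eq: "XG_vert G = VV" unfolding XG_vert_def by simp

lemma XG_adj_eq: "XG_adj G = L.E"
proof (intro ext)
  fix v w :: "'a \<times> 'a"
  show "XG_adj G v w = L.E v w"
  proof (cases "v \<in> VV \<and> w \<in> VV")
    case False
    then show ?thesis unfolding XG_adj_def cayley_adj_def L.E_def by auto
  next
    case True
    then obtain x y x' y' where v: "v = (x, y)" and w: "w = (x', y')"
      and c: "x \<in> carrier G" "y \<in> carrier G" "x' \<in> carrier G" "y' \<in> carrier G" by auto
    have inv: "inv\<^bsub>G \<times>\<times> G\<^esub> (x, y) = (inv x, inv y)" using inv_DirProd[OF is_group is_group] c by simp
    have A: "inv x \<otimes> x' = \<one> \<longleftrightarrow> x' = x" using eq1 c by simp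
    have B: "inv y \<otimes> y' = \<one> \<longleftrightarrow> y' = y" using eq1 c by simp
    have D: "inv x \<otimes> x' = inv y \<otimes> y' \<longleftrightarrow> y \<otimes> inv x = y' \<otimes> inv x'" using g3 c by simp
    have DA: "y \<otimes> inv x = y' \<otimes> inv x' \<Longrightarrow> x = x' \<Longrightarrow> y = y'" using c by simp
    have DB: "y \<otimes> inv x = y' \<otimes> inv x' \<Longrightarrow> y = y' \<Longrightarrow> x = x'" using c lcanc inv_eq_iff by simp
    have cl: "inv x \<otimes> x' \<in> carrier G" "inv y \<otimes> y' \<in> carrier G" using c by auto
    have "XG_adj G v w \<longleftrightarrow> (inv x \<otimes> x', inv y \<otimes> y') \<in> XG_conn G"
      unfolding XG_adj_def cayley_adj_def v w using inv c by simp
    also have "\<dots> \<longleftrightarrow> (inv y \<otimes> y' = \<one> \<and> inv x \<otimes> x' \<noteq> \<one>) \<or> (inv x \<otimes> x' = \<one> \<and> inv y \<otimes> y' \<noteq> \<one>)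
         \<or> (inv x \<otimes> x' = inv y \<otimes> y' \<and> inv x \<otimes> x' \<noteq> \<one>)"
      unfolding XG_conn_def using cl by auto
    also have "\<dots> \<longleftrightarrow> L.E v w"
      unfolding L.E_def ex3 v w pG_simps using A B D DA DB c by auto
    finally show ?thesis .
  qed
qed

lemma Tinv_val: "Tinv VV L.E = card (carrier G) ^ 2 * ((3 * card (carrier G) - 3) * ((card (carrier G) - 2) * (card (carrier G) - 3)) + 2 * (3 * num_inv2 G))"
proof -
  have "Tinv VV L.E = (\<Sum>a\<in>VV. L.Tloc a)" unfolding Tinv_def L.Tloc_def by simp
  also have "\<dots> = (\<Sum>a\<in>VV. (3 * card (carrier G) - 3) * ((card (carrier G) - 2) * (card (carrier G) - 3)) + 2 * (3 * num_inv2 G))"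
    by (rule sum.cong[OF refl]) (simp add: L.Tloc_eq cond_count)
  also have "\<dots> = card (carrier G) ^ 2 * ((3 * card (carrier G) - 3) * ((card (carrier G) - 2) * (card (carrier G) - 3)) + 2 * (3 * num_inv2 G))"
    using L.cardV by simp
  finally show ?thesis .
qed

end



lemma fgroupI: "group G \<Longrightarrow> finite (carrier G) \<Longrightarrow> fgroup G"
  by (simp add: fgroup_def fgroup_axioms_def)

theorem mainTheorem3:
  fixes G :: "('a, 'm) monoid_scheme" and n :: nat
  assumes "group G" and "finite (carrier G)" and "card (carrier G) = n" and "n \<ge> 3"
  shows "strongly_regular (XG_vert G) (XG_adj G) (n ^ 2) (3 * n - 3) n 6
     \<and> (\<forall>(H :: ('b, 'c) monoid_scheme). group H \<and> finite (carrier H) \<and> card (carrier H) = n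
          \<and> graph_iso (XG_vert G) (XG_adj G) (XG_vert H) (XG_adj H)
          \<longrightarrow> num_inv2 G = num_inv2 H)"
proof -
  interpret GG: fgroup G using fgroupI assms(1,2) by blast
  have part1: "strongly_regular (XG_vert G) (XG_adj G) (n ^ 2) (3 * n - 3) n 6"
    unfolding strongly_regular_def GG.XG_vert_eq GG.XG_adj_eq
  proof (intro conjI)
    show "finite (carrier G \<times> carrier G)" by (rule GG.L.finV)
    show "card (carrier G \<times> carrier G) = n ^ 2" using GG.L.cardV assms(3) by simp
    show "\<forall>x\<in>carrier G \<times> carrier G. card (nbhd (carrier G \<times> carrier G) GG.L.E x) = 3 * n - 3"
      using GG.L.deg assms(3) by simp
    show "\<exists>x\<in>carrier G \<times> carrier G. \<exists>y\<in>carrier G \<times> carrier G. x \<noteq> y \<and> \<not> GG.L.E x y"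
      using GG.L.exists_nonadj assms(3,4) by simp
    show "\<forall>x\<in>carrier G \<times> carrier G. \<forall>y\<in>carrier G \<times> carrier G. GG.L.E x y \<longrightarrow>
        card (nbhd (carrier G \<times> carrier G) GG.L.E x \<inter> nbhd (carrier G \<times> carrier G) GG.L.E y) = n"
      using GG.L.CN_adj assms(3) by simp
    show "\<forall>x\<in>carrier G \<times> carrier G. \<forall>y\<in>carrier G \<times> carrier G. x \<noteq> y \<and> \<not> GG.L.E x y \<longrightarrow>
        card (nbhd (carrier G \<times> carrier G) GG.L.E x \<inter> nbhd (carrier G \<times> carrier G) GG.L.E y) = 6"
      using GG.L.CN_nonadj by simp
  qed
  have part2: "num_inv2 G = num_inv2 H"
    if H: "group H" "finite (carrier H)" "card (carrier H) = n"
      and iso: "graph_iso (XG_vert G) (XG_adj G) (XG_vert H) (XG_adj H)"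
    for H :: "('b, 'c) monoid_scheme"
  proof -
    interpret HH: fgroup H using fgroupI H(1,2) by blast
    have "Tinv (XG_vert G) (XG_adj G) = Tinv (XG_vert H) (XG_adj H)" by (rule Tinv_iso[OF iso])
    then have eq: "n ^ 2 * ((3 * n - 3) * ((n - 2) * (n - 3)) + 2 * (3 * num_inv2 G))
        = n ^ 2 * ((3 * n - 3) * ((n - 2) * (n - 3)) + 2 * (3 * num_inv2 H))"
      unfolding GG.XG_vert_eq GG.XG_adj_eq HH.XG_vert_eq HH.XG_adj_eq GG.Tinv_val HH.Tinv_val
      using assms(3) H(3) by simp
    have "n ^ 2 > 0" using assms(4) by simp
    then show ?thesis using eq by simp
  qed
  show ?thesis using part1 part2 by blast
qed


end
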